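(* Let $(G,c)$ be a tensor network template. Let $d_{\min}=\min_{e\in E}c_e$, and let $k$ be the minimum cardinality of an edge cut set of $G$. Then $\mathrm{QMF}(G,c)\ge d_{\min}^{\,k}$.
   Context: A tensor network template $(G,c)$ consists of a finite undirected graph $G$ with edge set $E$ whose vertex set is partitioned as $S\sqcup T\sqcup V$. Every element of $S$ (inputs) and every element of $T$ (outputs) is an open end of degree $1$; the elements of $V$ are called vertices. For $u\in S\sqcup T$, $e(u)$ denotes the edge incident to $u$. A capacity function $c:E\to\mathbb{Z}_{>0}$ is given, and to each edge $e$ one associates $\mathbb{C}^{c_e}$ with a fixed basis. At each vertex $v$ of degree $d_v$ an ordering $e(v,1),\dots,e(v,d_v)$ of the incident edge-ends is fixed. A tensor assignment $\mathcal T=(\mathcal T_v)_{v\in V}$ chooses $\mathcal T_v\in\bigotimes_{i=1}^{d_v}\mathbb{C}^{c_{e(v,i)}}$ for each $v$. Let $V_S=\bigotimes_{u\in S}\mathbb{C}^{c_{e(u)}}$ and $V_T=\bigotimes_{u\in T}\mathbb{C}^{c_{e(u)}}$. Contracting the network along all edges gives $\beta(G,c;\mathcal T)\in\mathrm{Hom}(V_S,V_T)$, whose matrix entries are $\langle I_T|\beta|I_S\rangle=\sum_W\prod_{v\in V}(\mathcal T_v)_{W|_v}$. Here $W$ ranges over all assignments of basis indices to all edges that agree with $I_S$ on the input edges and with $I_T$ on the output edges, and $W|_v$ is the tuple of indices on $e(v,1),\dots,e(v,d_v)$. The quantum max-flow is $\mathrm{QMF}(G,c)=\max_{\mathcal T}\operatorname{rank}\beta(G,c;\mathcal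 T)$. An edge cut set is a set $C\subseteq E$ for which there is a partition $S\sqcup T\sqcup V=\bar S\sqcup\bar T$ with $S\subseteq\bar S$, $T\subseteq\bar T$, and $C$ equal to the set of edges having one endpoint in $\bar S$ and the other in $\bar T$. *)

theory Defs
  imports Complex_Main "HOL-Library.Function_Algebras"
begin

text \<open>A tensor network template is given by disjoint finite vertex sets S (inputs),
T (outputs), V (vertices), a finite edge set E of an abstract edge type, an endpoint map
ep (each edge has two, possibly equal, endpoints; multigraphs allowed), and a capacity c.
Edge-ends are pairs (e,b): b = False is the end at fst (ep e), b = True the end at snd (ep e).\<close>

definition ends :: "'e set \<Rightarrow> ('e \<Rightarrow> 'v \<times> 'v) \<Rightarrow> 'v \<Rightarrow> ('e \<times> bool) set" where
  "ends E ep v = {(e, b). e \<in> E \<and> (if b then snd (ep e) = v else fst (ep e) = v)}"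

definition tn_template ::
  "'v set \<Rightarrow> 'v set \<Rightarrow> 'v set \<Rightarrow> 'e set \<Rightarrow> ('e \<Rightarrow> 'v \<times> 'v) \<Rightarrow> ('e \<Rightarrow> nat) \<Rightarrow> bool" where
  "tn_template S T V E ep c \<longleftrightarrow>
     finite S \<and> finite T \<and> finite V \<and> finite E \<and>
     S \<inter> T = {} \<and> S \<inter> V = {} \<and> T \<inter> V = {} \<and>
     (\<forall>e\<in>E. fst (ep e) \<in> S \<union> T \<union> V \<and> snd (ep e) \<in> S \<union> T \<union> V) \<and>
     (\<forall>e\<in>E. c e > 0) \<and>
     (\<forall>u\<in>S \<union> T. card (ends E ep u) = 1)"

definition open_edge :: "'e set \<Rightarrow> ('e \<Rightarrow> 'v \<times> 'v) \<Rightarrow> 'v \<Rightarrow> 'e" where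
  "open_edge E ep u = (THE e. e \<in> E \<and> (fst (ep e) = u \<or> snd (ep e) = u))"

definition edge_indices :: "'e set \<Rightarrow> ('e \<Rightarrow> nat) \<Rightarrow> ('e \<Rightarrow> nat) set" where
  "edge_indices E c = {W. (\<forall>e\<in>E. W e < c e) \<and> (\<forall>e. e \<notin> E \<longrightarrow> W e = 0)}"

text \<open>Basis indices of V_S (U = S) or V_T (U = T) (0 outside U).\<close>
definition open_indices ::
  "'e set \<Rightarrow> ('e \<Rightarrow> 'v \<times> 'v) \<Rightarrow> ('e \<Rightarrow> nat) \<Rightarrow> 'v set \<Rightarrow> ('v \<Rightarrow> nat) set" where
  "open_indices E ep c U = {I. (\<forall>u\<in>U. I u < c (open_edge E ep u)) \<and> (\<forall>u. u \<notin> U \<longrightarrow> I u = 0)}"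

text \<open>A tensor at v is a complex-valued function
of such index tuples (the tuple is indexed by the edge-ends rather than by a fixed ordering
of them, which is the same data).\<close>
definition restrict_to_vertex ::
  "'e set \<Rightarrow> ('e \<Rightarrow> 'v \<times> 'v) \<Rightarrow> ('e \<Rightarrow> nat) \<Rightarrow> 'v \<Rightarrow> ('e \<times> bool \<Rightarrow> nat)" where
  "restrict_to_vertex E ep W v = (\<lambda>x. if x \<in> ends E ep v then W (fst x) else 0)"

definition contraction_entry ::
  "'v set \<Rightarrow> 'v set \<Rightarrow> 'v set \<Rightarrow> 'e set \<Rightarrow> ('e \<Rightarrow> 'v \<times> 'v) \<Rightarrow> ('e \<Rightarrow> nat) \<Rightarrow>
   ('v \<Rightarrow> ('e \<times> bool \<Rightarrow> nat) \<Rightarrow> complex) \<Rightarrow> ('v \<Rightarrow> nat) \<Rightarrow> ('v \<Rightarrow> nat) \<Rightarrow> complex" where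
  "contraction_entry S T V E ep c Tn IT IS =
     (\<Sum>W \<in> {W \<in> edge_indices E c. (\<forall>u\<in>S. W (open_edge E ep u) = IS u) \<and>
                                    (\<forall>u\<in>T. W (open_edge E ep u) = IT u)}.
        \<Prod>v\<in>V. Tn v (restrict_to_vertex E ep W v))"

definition mat_rank :: "'r set \<Rightarrow> 'c set \<Rightarrow> ('r \<Rightarrow> 'c \<Rightarrow> complex) \<Rightarrow> nat" where
  "mat_rank R C M =
     vector_space.dim (\<lambda>(a::complex) (f::'r \<Rightarrow> complex) x. a * f x)
       ((\<lambda>j i. if i \<in> R then M i j else 0) ` C)"

definition QMF ::
  "'v set \<Rightarrow> 'v set \<Rightarrow> 'v set \<Rightarrow> 'e set \<Rightarrow> ('e \<Rightarrow> 'v \<times> 'v) \<Rightarrow> ('e \<Rightarrow> nat) \<Rightarrow> nat" where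
  "QMF S T V E ep c =
     Sup {mat_rank (open_indices E ep c T) (open_indices E ep c S) (contraction_entry S T V E ep c Tn)
          | Tn :: 'v \<Rightarrow> ('e \<times> bool \<Rightarrow> nat) \<Rightarrow> complex. True}"

definition edge_cut_set ::
  "'v set \<Rightarrow> 'v set \<Rightarrow> 'v set \<Rightarrow> 'e set \<Rightarrow> ('e \<Rightarrow> 'v \<times> 'v) \<Rightarrow> 'e set \<Rightarrow> bool" where
  "edge_cut_set S T V E ep C \<longleftrightarrow>
     (\<exists>Sb Tb. Sb \<inter> Tb = {} \<and> Sb \<union> Tb = S \<union> T \<union> V \<and> S \<subseteq> Sb \<and> T \<subseteq> Tb \<and>
        C = {e \<in> E. (fst (ep e) \<in> Sb \<and> snd (ep e) \<in> Tb) \<or> (fst (ep e) \<in> Tb \<and> snd (ep e) \<in> Sb)})"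

end

theory Submission
  imports Defs "HOL-Library.FuncSet"
begin


definition walk :: "('v \<Rightarrow> 'v \<Rightarrow> bool) \<Rightarrow> nat \<Rightarrow> (nat \<Rightarrow> 'v) \<Rightarrow> bool" where
  "walk R n xs \<longleftrightarrow> (\<forall>i<n. R (xs i) (xs (Suc i)))"

definition reach :: "('v \<Rightarrow> 'v \<Rightarrow> bool) \<Rightarrow> 'v set \<Rightarrow> 'v \<Rightarrow> bool" where
  "reach R A y \<longleftrightarrow> (\<exists>n xs. xs 0 \<in> A \<and> xs n = y \<and> walk R n xs)"

lemma reach_base: "x \<in> A \<Longrightarrow> reach R A x"
  unfolding reach_def walk_def by (rule exI[of _ 0], rule exI[of _ "\<lambda>_. x"]) simp

lemma reach_step: assumes "reach R A y" "R y z" shows "reach R A z"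
proof -
  obtain n xs where xs: "xs 0 \<in> A" "xs n = y" "walk R n xs" using assms(1) unfolding reach_def by blast
  define ys where "ys = xs(Suc n := z)"
  have "ys 0 \<in> A" "ys (Suc n) = z" using xs by (auto simp: ys_def)
  moreover have "walk R (Suc n) ys"
    unfolding walk_def
  proof clarify
    fix i assume "i < Suc n"
    then show "R (ys i) (ys (Suc i))"
      using xs assms(2) unfolding walk_def ys_def by (cases "i = n") auto
  qed
  ultimately show ?thesis unfolding reach_def by blast
qed

lemma shortest_walk:
  assumes "xs0 0 \<in> A" "walk R n0 xs0" "xs0 n0 \<in> Z"
  shows "\<exists>n xs. xs 0 \<in> A \<and> xs n \<in> Z \<and> walk R n xs \<and> inj_on xs {..n} \<and> (\<forall>i<n. xs i \<notin> Z)"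
proof -
  define P where "P n \<longleftrightarrow> (\<exists>xs. xs 0 \<in> A \<and> xs n \<in> Z \<and> walk R n xs)" for n
  have "P n0" using assms unfolding P_def by blast
  define n where "n = (LEAST n. P n)"
  have Pn: "P n" unfolding n_def using LeastI[of P n0] \<open>P n0\<close> by blast
  have minP: "\<not> P m" if "m < n" for m using not_less_Least[of m P] that unfolding n_def by blast
  obtain xs where xs: "xs 0 \<in> A" "xs n \<in> Z" "walk R n xs" using Pn unfolding P_def by blast
  have interior: "\<forall>i<n. xs i \<notin> Z"
  proof clarify
    fix i assume "i < n" "xs i \<in> Z"
    then have "P i" using xs unfolding P_def walk_def by (auto intro!: exI[of _ xs])
    then show False using minP \<open>i < n\<close> by blast
  qed
  have noeq: "xs i \<noteq> xs j" if ij: "i < j" "j \<le> n" for i j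
  proof
    assume eq: "xs i = xs j"
    define ys where "ys m = (if m \<le> i then xs m else xs (m + (j - i)))" for m
    define n' where "n' = n - (j - i)"
    have "ys 0 \<in> A" using xs by (simp add: ys_def)
    moreover have "ys n' \<in> Z"
    proof (cases "n' \<le> i")
      case True
      then have "n' = i" using ij by (simp add: n'_def)
      then have "j = n" using ij by (simp add: n'_def)
      then show ?thesis using \<open>n' = i\<close> eq xs(2) by (simp add: ys_def)
    next
      case False
      then show ?thesis using ij xs(2) by (simp add: ys_def n'_def)
    qed
    moreover have "walk R n' ys"
      unfolding walk_def
    proof clarify
      fix m assume m: "m < n'"
      show "R (ys m) (ys (Suc m))"
      proof (cases "m < i")
        case True then show ?thesis using xs(3) ij unfolding walk_def ys_def by auto
      next
        case False
        show ?thesis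
        proof (cases "m = i")
          case True
          have "R (xs j) (xs (Suc j))" using xs(3) m True ij unfolding walk_def n'_def by auto
          moreover have "Suc m + (j - i) = Suc j" using True ij by simp
          ultimately show ?thesis using True eq by (simp add: ys_def)
        next
          case False
          then have "m > i" using \<open>\<not> m < i\<close> by simp
          have "R (xs (m + (j - i))) (xs (Suc (m + (j - i))))" using xs(3) m ij unfolding walk_def n'_def by auto
          then show ?thesis using \<open>m > i\<close> by (simp add: ys_def)
        qed
      qed
    qed
    ultimately have "P n'" unfolding P_def by blast
    moreover have "n' < n" using ij by (simp add: n'_def)
    ultimately show False using minP by blast
  qed
  have "inj_on xs {..n}"
  proof (rule inj_onI)
    fix i j assume "i \<in> {..n}" "j \<in> {..n}" "xs i = xs j"
    then show "i = j" using noeq[of i j] noeq[of j i] by (cases i j rule: linorder_cases) auto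
  qed
  then show ?thesis using xs interior by blast
qed

lemma edge_inj:
  assumes inj: "inj_on xs {..n}"
    and ep: "\<And>i. i < n \<Longrightarrow> ep (es i) = (xs i, xs (Suc i)) \<or> ep (es i) = (xs (Suc i), xs i)"
  shows "inj_on es {..<n}"
proof (rule inj_onI)
  have X: "i = j" if ij: "i < n" "j < n" "es i = es j" "i \<le> j" for i j
  proof (rule ccontr)
    assume "i \<noteq> j"
    then have lt: "i < j" using ij by simp
    have e: "ep (es i) = ep (es j)" using ij by simp
    have d1: "xs i \<noteq> xs j" "xs (Suc i) \<noteq> xs (Suc j)" "xs i \<noteq> xs (Suc j)"
      using inj lt ij by (auto dest: inj_onD)
    show False using ep[OF ij(1)] ep[OF ij(2)] e d1 by auto
  qed
  fix i j assume "i \<in> {..<n}" "j \<in> {..<n}" "es i = es j"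
  then show "i = j" using X[of i j] X[of j i] by (cases "i \<le> j") auto
qed



lemma sum_fun_apply: "(\<Sum>w\<in>t. (f w :: 'a \<Rightarrow> 'b::comm_monoid_add)) x = (\<Sum>w\<in>t. f w x)"
  by (induct t rule: infinite_finite_induct) (auto simp: plus_fun_def zero_fun_def)

lemma vs_fun: "vector_space (\<lambda>(a::complex) (f::'r \<Rightarrow> complex) x. a * f x)"
  by unfold_locales (auto simp: fun_eq_iff algebra_simps)

lemma mat_rank_le:
  assumes "finite C"
  shows "mat_rank R C M \<le> card C"
proof -
  interpret vs: vector_space "\<lambda>(a::complex) (f::'r \<Rightarrow> complex) x. a * f x" by (rule vs_fun)
  have "mat_rank R C M \<le> card ((\<lambda>j i. if i \<in> R then M i j else 0) ` C)"
    unfolding mat_rank_def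
    by (rule vs.dim_le_card) (auto intro: vs.span_base simp: assms)
  also have "\<dots> \<le> card C" by (rule card_image_le[OF assms])
  finally show ?thesis .
qed

lemma mat_rank_ge:
  fixes M :: "'r \<Rightarrow> 'c \<Rightarrow> complex"
  assumes "finite C" "g ` A \<subseteq> C" "h ` A \<subseteq> R"
    and diag: "\<And>a b. a \<in> A \<Longrightarrow> b \<in> A \<Longrightarrow> M (h a) (g b) = 0 \<longleftrightarrow> a \<noteq> b"
  shows "card A \<le> mat_rank R C M"
proof -
  interpret vs: vector_space "\<lambda>(a::complex) (f::'r \<Rightarrow> complex) x. a * f x" by (rule vs_fun)
  define col where "col = (\<lambda>j i. if i \<in> R then M i j else 0)"
  have colh: "col (g b) (h a) = M (h a) (g b)" if "a \<in> A" for a b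
    using assms(3) that by (auto simp: col_def)
  have inj: "inj_on (col \<circ> g) A"
  proof (rule inj_onI)
    fix a b assume ab: "a \<in> A" "b \<in> A" "(col \<circ> g) a = (col \<circ> g) b"
    then have "col (g a) (h a) = col (g b) (h a)" by simp
    then have "M (h a) (g a) = M (h a) (g b)" using colh ab by simp
    then show "a = b" using diag[OF ab(1) ab(1)] diag[OF ab(1) ab(2)] by auto
  qed
  have ind: "vs.independent ((col \<circ> g) ` A)"
    unfolding vs.dependent_explicit
  proof clarify
    fix t u v assume t: "finite t" "t \<subseteq> (col \<circ> g) ` A" and
      s: "(\<Sum>v\<in>t. (\<lambda>x. u v * v x)) = 0" and v: "v \<in> t" "u v \<noteq> 0"
    obtain a where a: "a \<in> A" "v = col (g a)" using t v by auto
    have "(\<Sum>w\<in>t. (\<lambda>x. u w * w x)) (h a) = 0" using s by simp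
    then have "(\<Sum>w\<in>t. u w * w (h a)) = 0" by (simp add: sum_fun_apply)
    moreover have "(\<Sum>w\<in>t. u w * w (h a)) = u v * v (h a)"
    proof (rule sum.remove[OF t(1) v(1), THEN trans])
      have "(\<Sum>w\<in>t - {v}. u w * w (h a)) = 0"
      proof (rule sum.neutral, rule ballI)
        fix w assume w: "w \<in> t - {v}"
        then obtain b where b: "b \<in> A" "w = col (g b)" using t by auto
        then have "a \<noteq> b" using w a by auto
        then show "u w * w (h a) = 0" using b colh[OF a(1)] diag[OF a(1) b(1)] by simp
      qed
      then show "u v * v (h a) + (\<Sum>w\<in>t - {v}. u w * w (h a)) = u v * v (h a)" by simp
    qed
    moreover have "v (h a) \<noteq> 0" using a colh[OF a(1)] diag[OF a(1) a(1)] by simp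
    ultimately show False using v(2) by simp
  qed
  have "card A = card ((col \<circ> g) ` A)" using card_image[OF inj] by simp
  also have "\<dots> \<le> vs.dim (col ` C)"
  proof -
    have sub: "(col \<circ> g) ` A \<subseteq> col ` C" using assms(2) by auto
    obtain B where B: "(col \<circ> g) ` A \<subseteq> B" "B \<subseteq> col ` C" "vs.independent B" "col ` C \<subseteq> vs.span B"
      by (rule vs.maximal_independent_subset_extend[OF sub ind])
    have fB: "finite B" using B(2) \<open>finite C\<close> finite_subset by blast
    have "card B = vs.dim (col ` C)" by (rule vs.basis_card_eq_dim[OF B(2) B(4) B(3)])
    moreover have "card ((col \<circ> g) ` A) \<le> card B" by (rule card_mono[OF fB B(1)])
    ultimately show ?thesis by simp
  qed
  finally show ?thesis unfolding mat_rank_def col_def .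
qed

definition linked :: "'v set \<Rightarrow> ('e \<Rightarrow> 'v \<times> 'v) \<Rightarrow> ('e \<Rightarrow> nat option) \<Rightarrow> 'e \<Rightarrow> 'e \<Rightarrow> bool" where
  "linked V ep lab e e' \<longleftrightarrow> (\<exists>j. lab e = Some j \<and> lab e' = Some j) \<and>
     (\<exists>v\<in>V. (fst (ep e) = v \<or> snd (ep e) = v) \<and> (fst (ep e') = v \<or> snd (ep e') = v))"

definition lval :: "(nat \<Rightarrow> nat) \<Rightarrow> nat option \<Rightarrow> nat" where
  "lval a oo = (case oo of None \<Rightarrow> 0 | Some j \<Rightarrow> a j)"

lemma prod_indicator: assumes "finite V" shows "(\<Prod>v\<in>V. if P v then 1 else (0::complex)) = (if \<forall>v\<in>V. P v then 1 else 0)"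
proof (cases "\<forall>v\<in>V. P v")
  case True then show ?thesis by simp
next
  case False
  then obtain v where "v \<in> V" "\<not> P v" by blast
  then show ?thesis using assms
    by (auto intro!: prod_zero[of V] bexI[of _ v])
qed

lemma sum_indicator_card: "finite X \<Longrightarrow> (\<Sum>W\<in>X. if Q W then 1 else (0::complex)) = of_nat (card {W\<in>X. Q W})"
  by (simp add: sum.inter_filter[symmetric])

context
  fixes S T V :: "'v set" and E :: "'e set" and ep :: "'e \<Rightarrow> 'v \<times> 'v" and c :: "'e \<Rightarrow> nat"
  assumes tmpl: "tn_template S T V E ep c"
begin

lemma ends_edges: "{e \<in> E. fst (ep e) = u \<or> snd (ep e) = u} = fst ` ends E ep u"
  by (auto simp: ends_def image_def split: if_splits)

lemma open_edge_unique:
  assumes u: "u \<in> S \<union> T" and e: "e \<in> E" "fst (ep e) = u \<or> snd (ep e) = u"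
  shows "open_edge E ep u = e"
proof -
  have "card (ends E ep u) = 1" using tmpl u by (auto simp: tn_template_def)
  then obtain p where p: "ends E ep u = {p}" by (rule card_1_singletonE)
  have inc: "{e \<in> E. fst (ep e) = u \<or> snd (ep e) = u} = {fst p}" using ends_edges p by simp
  have eq: "e' = fst p" if "e' \<in> E \<and> (fst (ep e') = u \<or> snd (ep e') = u)" for e'
    using that inc by blast
  show ?thesis unfolding open_edge_def
  proof (rule the_equality)
    show "e \<in> E \<and> (fst (ep e) = u \<or> snd (ep e) = u)" using e by blast
    fix e' assume "e' \<in> E \<and> (fst (ep e') = u \<or> snd (ep e') = u)"
    then show "e' = e" using eq e by blast
  qed
qed

lemma open_edge_in:
  assumes u: "u \<in> S \<union> T"
  shows "open_edge E ep u \<in> E \<and> (fst (ep (open_edge E ep u)) = u \<or> snd (ep (open_edge E ep u)) = u)"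
proof -
  have "card (ends E ep u) = 1" using tmpl u by (auto simp: tn_template_def)
  then obtain p where p: "ends E ep u = {p}" by (rule card_1_singletonE)
  have inc: "{e \<in> E. fst (ep e) = u \<or> snd (ep e) = u} = {fst p}" using ends_edges p by simp
  then have h: "fst p \<in> E \<and> (fst (ep (fst p)) = u \<or> snd (ep (fst p)) = u)" by blast
  then have "open_edge E ep u = fst p" using open_edge_unique[OF u] by blast
  then show ?thesis using h by simp
qed

lemma finite_edge_indices: "finite (edge_indices E c)"
proof -
  have fE: "finite E" using tmpl by (simp add: tn_template_def)
  have "edge_indices E c \<subseteq> {W. \<forall>e. (e \<in> E \<longrightarrow> W e \<in> {..< sum c E}) \<and> (e \<notin> E \<longrightarrow> W e = 0)}"
    unfolding edge_indices_def using member_le_sum[of _ E c] fE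
    by (auto intro: less_le_trans)
  then show ?thesis by (rule finite_subset) (rule finite_set_of_finite_funs[OF fE], simp)
qed

lemma finite_open_indices: "finite U \<Longrightarrow> finite (open_indices E ep c U)"
proof -
  assume fU: "finite U"
  have "open_indices E ep c U \<subseteq> {I. \<forall>u. (u \<in> U \<longrightarrow> I u \<in> {..< sum (\<lambda>u. c (open_edge E ep u)) U}) \<and> (u \<notin> U \<longrightarrow> I u = 0)}"
    unfolding open_indices_def using member_le_sum[of _ U "\<lambda>u. c (open_edge E ep u)"] fU
    by (auto intro: less_le_trans)
  then show ?thesis by (rule finite_subset) (rule finite_set_of_finite_funs[OF fU], simp)
qed

lemma tensor_bound:
  fixes lab :: "'e \<Rightarrow> nat option" and k d :: nat
  assumes L1: "\<And>e j. lab e = Some j \<Longrightarrow> e \<in> E \<and> j < k"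
    and L2: "\<And>j. j < k \<Longrightarrow> \<exists>s\<in>S. \<exists>t\<in>T. lab (open_edge E ep s) = Some j \<and> lab (open_edge E ep t) = Some j
                 \<and> (linked V ep lab)\<^sup>*\<^sup>* (open_edge E ep s) (open_edge E ep t)"
    and dle: "\<And>e. e \<in> E \<Longrightarrow> d \<le> c e"
  shows "d ^ k \<le> QMF S T V E ep c"
proof -
  have fE: "finite E" and fS: "finite S" and fT: "finite T" and fV: "finite V"
    and cpos: "\<And>e. e \<in> E \<Longrightarrow> c e > 0"
    using tmpl by (auto simp: tn_template_def)
  define good where "good W v \<longleftrightarrow> (\<forall>p\<in>ends E ep v. \<forall>q\<in>ends E ep v.
      (lab (fst p) \<noteq> None \<longrightarrow> lab (fst p) = lab (fst q) \<longrightarrow> W (fst p) = W (fst q)) \<and>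
      (lab (fst p) = None \<longrightarrow> W (fst p) = 0))" for W :: "'e \<Rightarrow> nat" and v
  define Tn :: "'v \<Rightarrow> ('e \<times> bool \<Rightarrow> nat) \<Rightarrow> complex" where "Tn v x = (if (\<forall>p\<in>ends E ep v. \<forall>q\<in>ends E ep v.
      (lab (fst p) \<noteq> None \<longrightarrow> lab (fst p) = lab (fst q) \<longrightarrow> x p = x q) \<and>
      (lab (fst p) = None \<longrightarrow> x p = 0)) then 1 else 0)" for v x
  have Tn_eq: "Tn v (restrict_to_vertex E ep W v) = (if good W v then 1 else 0)" for v W
    unfolding Tn_def good_def restrict_to_vertex_def by simp
  define X where "X IT IS = {W \<in> edge_indices E c. (\<forall>u\<in>S. W (open_edge E ep u) = IS u) \<and>
                                    (\<forall>u\<in>T. W (open_edge E ep u) = IT u)}" for IT IS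
  have fX: "finite (X IT IS)" for IT IS
    unfolding X_def by (rule finite_subset[OF _ finite_edge_indices]) auto
  have entry: "contraction_entry S T V E ep c Tn IT IS = of_nat (card {W \<in> X IT IS. \<forall>v\<in>V. good W v})" for IT IS
    unfolding contraction_entry_def X_def[symmetric] Tn_eq prod_indicator[OF fV]
    by (rule sum_indicator_card[OF fX])
  define A where "A = PiE {..<k} (\<lambda>_. {..<d})"
  define col where "col a u = (if u \<in> S then lval a (lab (open_edge E ep u)) else 0)" for a u
  define row where "row a u = (if u \<in> T then lval a (lab (open_edge E ep u)) else 0)" for a u
  define Wc where "Wc a e = (if e \<in> E then lval a (lab e) else 0)" for a e
  have lval_lt: "lval a (lab e) < c e" if "a \<in> A" "e \<in> E" for a e
  proof (cases "lab e")
    case None then show ?thesis using cpos that by (simp add: lval_def)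
  next
    case (Some j)
    then have "j < k" using L1 by blast
    then have "a j < d" using that(1) by (auto simp: A_def PiE_iff)
    then show ?thesis using Some dle[OF that(2)] by (simp add: lval_def)
  qed
  have colin: "col a \<in> open_indices E ep c S" if "a \<in> A" for a
    unfolding open_indices_def col_def using lval_lt[OF that] open_edge_in by auto
  have rowin: "row a \<in> open_indices E ep c T" if "a \<in> A" for a
    unfolding open_indices_def row_def using lval_lt[OF that] open_edge_in by auto
  have Wc_in: "Wc a \<in> {W \<in> X (row a) (col a). \<forall>v\<in>V. good W v}" if "a \<in> A" for a
  proof -
    have "Wc a \<in> edge_indices E c" unfolding edge_indices_def Wc_def using lval_lt[OF that] by auto
    moreover have "\<forall>u\<in>S. Wc a (open_edge E ep u) = col a u" unfolding Wc_def col_def using open_edge_in by auto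
    moreover have "\<forall>u\<in>T. Wc a (open_edge E ep u) = row a u" unfolding Wc_def row_def using open_edge_in by auto
    moreover have "good (Wc a) v" for v
      unfolding good_def Wc_def by (auto simp: ends_def lval_def)
    ultimately show ?thesis unfolding X_def by auto
  qed
  have linked_eq: "W e = W e'" if "\<forall>v\<in>V. good W v" "(linked V ep lab)\<^sup>*\<^sup>* e e'" for W e e'
    using that(2)
  proof (induction rule: rtranclp_induct)
    case base then show ?case by simp
  next
    case (step y z)
    from step(2) obtain j v where j: "lab y = Some j" "lab z = Some j" and v: "v \<in> V"
      "fst (ep y) = v \<or> snd (ep y) = v" "fst (ep z) = v \<or> snd (ep z) = v"
      unfolding linked_def by blast
    have yz: "y \<in> E" "z \<in> E" using L1 j by blast+
    have p: "(y, fst (ep y) \<noteq> v) \<in> ends E ep v" using yz v by (auto simp: ends_def)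
    have q: "(z, fst (ep z) \<noteq> v) \<in> ends E ep v" using yz v by (auto simp: ends_def)
    have "W y = W z" using that(1) v(1) p q j unfolding good_def by fastforce
    then show ?case using step(3) by simp
  qed
  have diag: "contraction_entry S T V E ep c Tn (row a) (col b) = 0 \<longleftrightarrow> a \<noteq> b"
    if ab: "a \<in> A" "b \<in> A" for a b
  proof (cases "a = b")
    case True
    then have "{W \<in> X (row a) (col b). \<forall>v\<in>V. good W v} \<noteq> {}" using Wc_in[OF ab(1)] by auto
    then have "card {W \<in> X (row a) (col b). \<forall>v\<in>V. good W v} \<noteq> 0" using fX by auto
    then show ?thesis using True entry by simp
  next
    case False
    then obtain j where j: "j < k" "a j \<noteq> b j" using PiE_ext[of a "{..<k}" _ b] ab unfolding A_def by blast
    obtain s t where st: "s \<in> S" "t \<in> T" "lab (open_edge E ep s) = Some j" "lab (open_edge E ep t) = Some j"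
      "(linked V ep lab)\<^sup>*\<^sup>* (open_edge E ep s) (open_edge E ep t)" using L2[OF j(1)] by blast
    have "{W \<in> X (row a) (col b). \<forall>v\<in>V. good W v} = {}"
    proof (rule ccontr)
      assume "{W \<in> X (row a) (col b). \<forall>v\<in>V. good W v} \<noteq> {}"
      then obtain W where W: "W \<in> X (row a) (col b)" "\<forall>v\<in>V. good W v" by blast
      have "W (open_edge E ep s) = b j" using W(1) st unfolding X_def col_def by (auto simp: lval_def)
      moreover have "W (open_edge E ep t) = a j" using W(1) st unfolding X_def row_def by (auto simp: lval_def)
      moreover have "W (open_edge E ep s) = W (open_edge E ep t)" by (rule linked_eq[OF W(2) st(5)])
      ultimately show False using j by simp
    qed
    then have "contraction_entry S T V E ep c Tn (row a) (col b) = 0"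
      by (simp only: entry card.empty of_nat_0)
    then show ?thesis using False by simp
  qed
  have "card A \<le> mat_rank (open_indices E ep c T) (open_indices E ep c S) (contraction_entry S T V E ep c Tn)"
    by (rule mat_rank_ge[where g = col and h = row])
       (use finite_open_indices[OF fS] colin rowin diag in auto)
  moreover have "card A = d ^ k" unfolding A_def by (simp add: card_PiE)
  moreover have "mat_rank (open_indices E ep c T) (open_indices E ep c S) (contraction_entry S T V E ep c Tn)
      \<le> QMF S T V E ep c"
    unfolding QMF_def
  proof (rule cSup_upper)
    show "bdd_above {mat_rank (open_indices E ep c T) (open_indices E ep c S) (contraction_entry S T V E ep c Tn) |
          Tn :: 'v \<Rightarrow> ('e \<times> bool \<Rightarrow> nat) \<Rightarrow> complex. True}"
      by (rule bdd_aboveI[where M = "card (open_indices E ep c S)"])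
         (auto intro: mat_rank_le finite_open_indices fS)
  qed blast
  ultimately show ?thesis by linarith
qed

end



definition coef :: "('e \<Rightarrow> 'v \<times> 'v) \<Rightarrow> 'e \<Rightarrow> 'v \<Rightarrow> int" where
  "coef ep e x = (if fst (ep e) = x then 1 else 0) - (if snd (ep e) = x then 1 else 0)"

definition netf :: "'e set \<Rightarrow> ('e \<Rightarrow> 'v \<times> 'v) \<Rightarrow> ('e \<Rightarrow> int) \<Rightarrow> 'v \<Rightarrow> int" where
  "netf E ep f x = (\<Sum>e\<in>E. coef ep e x * f e)"

definition isflow :: "'v set \<Rightarrow> 'e set \<Rightarrow> ('e \<Rightarrow> 'v \<times> 'v) \<Rightarrow> ('e \<Rightarrow> int) \<Rightarrow> bool" where
  "isflow V E ep f \<longleftrightarrow> (\<forall>e. f e \<in> {-1, 0, 1}) \<and> (\<forall>v\<in>V. netf E ep f v = 0)"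

lemma sum_netf:
  assumes "finite A"
  shows "(\<Sum>x\<in>A. netf E ep f x) = (\<Sum>e\<in>E. ((if fst (ep e) \<in> A then 1 else 0) - (if snd (ep e) \<in> A then 1 else 0)) * f e)"
proof -
  have "(\<Sum>x\<in>A. netf E ep f x) = (\<Sum>e\<in>E. \<Sum>x\<in>A. coef ep e x * f e)"
    unfolding netf_def by (rule sum.swap)
  also have "\<dots> = (\<Sum>e\<in>E. ((if fst (ep e) \<in> A then 1 else 0) - (if snd (ep e) \<in> A then 1 else 0)) * f e)"
  proof (rule sum.cong[OF refl])
    fix e
    have "(\<Sum>x\<in>A. coef ep e x * f e) = (\<Sum>x\<in>A. coef ep e x) * f e" by (simp add: sum_distrib_right)
    also have "(\<Sum>x\<in>A. coef ep e x) = (if fst (ep e) \<in> A then 1 else 0) - (if snd (ep e) \<in> A then 1 else 0)"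
      unfolding coef_def sum_subtractf using assms by (simp add: sum.delta)
    finally show "(\<Sum>x\<in>A. coef ep e x * f e) = ((if fst (ep e) \<in> A then 1 else 0) - (if snd (ep e) \<in> A then 1 else 0)) * f e" .
  qed
  finally show ?thesis .
qed

lemma path_mod:
  assumes fE: "finite E"
    and es: "\<And>i. i < n \<Longrightarrow> es i \<in> E \<and> (ep (es i) = (xs i, xs (Suc i)) \<or> ep (es i) = (xs (Suc i), xs i))"
    and ne: "\<And>i. i < n \<Longrightarrow> xs i \<noteq> xs (Suc i)"
  shows "netf E ep (\<lambda>e. f e + cc * (\<Sum>i<n. if es i = e then (if ep (es i) = (xs i, xs (Suc i)) then 1 else -1) else 0)) x
       = netf E ep f x + cc * ((if x = xs 0 then 1 else 0) - (if x = xs n then 1 else 0))"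
proof -
  define sg where "sg i = (if ep (es i) = (xs i, xs (Suc i)) then 1 else -1 :: int)" for i
  have "netf E ep (\<lambda>e. f e + cc * (\<Sum>i<n. if es i = e then sg i else 0)) x
      = netf E ep f x + cc * (\<Sum>i<n. \<Sum>e\<in>E. coef ep e x * (if es i = e then sg i else 0))"
  proof -
    have "(\<Sum>e\<in>E. coef ep e x * (f e + cc * (\<Sum>i<n. if es i = e then sg i else 0)))
        = (\<Sum>e\<in>E. coef ep e x * f e) + cc * (\<Sum>e\<in>E. \<Sum>i<n. coef ep e x * (if es i = e then sg i else 0))"
    proof -
      have "coef ep e x * (f e + cc * (\<Sum>i<n. if es i = e then sg i else 0))
          = coef ep e x * f e + cc * (\<Sum>i<n. coef ep e x * (if es i = e then sg i else 0))" for e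
        by (simp only: sum_distrib_left[symmetric] ring_distribs mult.left_commute)
      then show ?thesis by (simp only: sum.distrib sum_distrib_left)
    qed
    also have "(\<Sum>e\<in>E. \<Sum>i<n. coef ep e x * (if es i = e then sg i else 0))
        = (\<Sum>i<n. \<Sum>e\<in>E. coef ep e x * (if es i = e then sg i else 0))"
      by (rule sum.swap)
    finally show ?thesis unfolding netf_def .
  qed
  also have "(\<Sum>i<n. \<Sum>e\<in>E. coef ep e x * (if es i = e then sg i else 0)) = (\<Sum>i<n. coef ep (es i) x * sg i)"
  proof (rule sum.cong[OF refl])
    fix i assume "i \<in> {..<n}"
    then have "es i \<in> E" using es by auto
    then show "(\<Sum>e\<in>E. coef ep e x * (if es i = e then sg i else 0)) = coef ep (es i) x * sg i"
      using fE by (simp add: if_distrib[of "\<lambda>t. coef ep _ x * t"] sum.delta cong: if_cong)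
  qed
  also have "\<dots> = (\<Sum>i<n. (if x = xs i then 1 else 0) - (if x = xs (Suc i) then 1 else 0))"
  proof (rule sum.cong[OF refl])
    fix i assume "i \<in> {..<n}"
    then have "i < n" by simp
    then show "coef ep (es i) x * sg i = (if x = xs i then 1 else 0) - (if x = xs (Suc i) then 1 else 0)"
    proof (cases "ep (es i) = (xs i, xs (Suc i))")
      case True
      then show ?thesis unfolding coef_def sg_def by (cases "x = xs i"; cases "x = xs (Suc i)") auto
    next
      case False
      then have "ep (es i) = (xs (Suc i), xs i)" using es[OF \<open>i < n\<close>] by blast
      then show ?thesis using False unfolding coef_def sg_def by (cases "x = xs i"; cases "x = xs (Suc i)") auto
    qed
  qed
  also have "\<dots> = (if x = xs 0 then 1 else 0) - (if x = xs n then 1 else 0)"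
    by (rule sum_lessThan_telescope'[where f = "\<lambda>i. if x = xs i then 1 else 0"])
  finally show ?thesis by (simp only: sg_def)
qed

lemma path_mod_val:
  fixes n :: nat
  assumes inj: "inj_on es {..<n}" and i: "i < n"
  shows "(\<Sum>j<n. if es j = es i then (g j :: int) else 0) = g i"
proof -
  have "(\<Sum>j<n. if es j = es i then g j else 0) = (\<Sum>j<n. if j = i then g j else 0)"
    by (rule sum.cong[OF refl]) (use inj i in \<open>auto dest: inj_onD\<close>)
  also have "\<dots> = g i" using i by (subst sum.delta) auto
  finally show ?thesis .
qed

lemma path_mod_out:
  fixes n :: nat
  assumes "e \<notin> es ` {..<n}"
  shows "(\<Sum>j<n. if es j = e then (g j :: int) else 0) = 0"
  using assms by (intro sum.neutral) auto

definition resr :: "'e set \<Rightarrow> ('e \<Rightarrow> 'v \<times> 'v) \<Rightarrow> ('e \<Rightarrow> int) \<Rightarrow> 'v \<Rightarrow> 'v \<Rightarrow> bool" where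
  "resr E ep f x y \<longleftrightarrow> x \<noteq> y \<and> (\<exists>e\<in>E. (ep e = (x, y) \<and> f e < 1) \<or> (ep e = (y, x) \<and> f e > -1))"

context
  fixes S T V :: "'v set" and E :: "'e set" and ep :: "'e \<Rightarrow> 'v \<times> 'v" and c :: "'e \<Rightarrow> nat"
  assumes tmpl: "tn_template S T V E ep c"
begin

lemma tm: "finite S" "finite T" "finite V" "finite E" "S \<inter> T = {}" "S \<inter> V = {}" "T \<inter> V = {}"
  "\<And>e. e \<in> E \<Longrightarrow> fst (ep e) \<in> S \<union> T \<union> V \<and> snd (ep e) \<in> S \<union> T \<union> V"
  using tmpl by (auto simp: tn_template_def)

lemma augment:
  assumes fl: "isflow V E ep f" and lt: "(\<Sum>s\<in>S. netf E ep f s) < int k"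
    and kmin: "\<And>C. edge_cut_set S T V E ep C \<Longrightarrow> k \<le> card C"
  shows "\<exists>f'. isflow V E ep f' \<and> (\<Sum>s\<in>S. netf E ep f' s) = (\<Sum>s\<in>S. netf E ep f s) + 1"
proof (cases "\<exists>t\<in>T. reach (resr E ep f) S t")
  case True
  then obtain t n0 xs0 where "xs0 0 \<in> S" "walk (resr E ep f) n0 xs0" "xs0 n0 \<in> T"
    unfolding reach_def by blast
  from shortest_walk[OF this] obtain n xs where xs: "xs 0 \<in> S" "xs n \<in> T" "walk (resr E ep f) n xs"
    "inj_on xs {..n}" by blast
  have "\<forall>i. \<exists>e. i < n \<longrightarrow> xs i \<noteq> xs (Suc i) \<and> e \<in> E \<and> ((ep e = (xs i, xs (Suc i)) \<and> f e < 1) \<or> (ep e = (xs (Suc i), xs i) \<and> f e > -1))"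
    using xs(3) unfolding walk_def resr_def by blast
  then obtain es where es: "\<And>i. i < n \<Longrightarrow> xs i \<noteq> xs (Suc i) \<and> es i \<in> E \<and> ((ep (es i) = (xs i, xs (Suc i)) \<and> f (es i) < 1) \<or> (ep (es i) = (xs (Suc i), xs i) \<and> f (es i) > -1))"
    by metis
  have injes: "inj_on es {..<n}" by (rule edge_inj[OF xs(4), where ep = ep]) (use es in blast)
  define sg where "sg i = (if ep (es i) = (xs i, xs (Suc i)) then 1 else -1 :: int)" for i
  define f' where "f' e = f e + 1 * (\<Sum>i<n. if es i = e then sg i else 0)" for e
  have net: "netf E ep f' x = netf E ep f x + 1 * ((if x = xs 0 then 1 else 0) - (if x = xs n then 1 else 0))" for x
    unfolding f'_def sg_def by (rule path_mod[OF tm(4)]) (use es in auto)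
  have valid: "f' e \<in> {-1, 0, 1}" for e
  proof (cases "e \<in> es ` {..<n}")
    case True
    then obtain i where i: "i < n" "e = es i" by auto
    have "f' e = f e + sg i" unfolding f'_def using path_mod_val[OF injes i(1), of sg] i by simp
    moreover have "f e \<in> {-1, 0, 1}" using fl unfolding isflow_def by blast
    ultimately show ?thesis using es[OF i(1)] i unfolding sg_def by (auto split: if_splits)
  next
    case False
    then have "f' e = f e" unfolding f'_def using path_mod_out[OF False] by simp
    then show ?thesis using fl unfolding isflow_def by simp
  qed
  have cons: "\<forall>v\<in>V. netf E ep f' v = 0"
    using fl xs(1,2) tm(6,7) net unfolding isflow_def by auto
  have "(\<Sum>s\<in>S. netf E ep f' s) = (\<Sum>s\<in>S. netf E ep f s + ((if s = xs 0 then 1 else 0) - (if s = xs n then 1 else 0)))"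
    using net by simp
  also have "\<dots> = (\<Sum>s\<in>S. netf E ep f s) + 1"
    using xs(1,2) tm(1,5) by (auto simp: sum.distrib sum_subtractf)
  finally show ?thesis using valid cons unfolding isflow_def by blast
next
  case False
  define A where "A = {y. reach (resr E ep f) S y}"
  have SA: "S \<subseteq> A" unfolding A_def using reach_base by fast
  have TA: "A \<inter> T = {}" using False unfolding A_def by blast
  have clos: "y \<in> A" if "x \<in> A" "resr E ep f x y" for x y
    using that reach_step unfolding A_def by fast
  have Asub: "A \<subseteq> S \<union> T \<union> V"
  proof
    fix y assume "y \<in> A"
    then obtain n xs where xs: "xs 0 \<in> S" "xs n = y" "walk (resr E ep f) n xs" unfolding A_def reach_def by blast
    show "y \<in> S \<union> T \<union> V"
    proof (cases n)
      case 0 then show ?thesis using xs by simp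
    next
      case (Suc m)
      then have "resr E ep f (xs m) y" using xs unfolding walk_def by auto
      then obtain e where "e \<in> E" "ep e = (xs m, y) \<or> ep e = (y, xs m)" unfolding resr_def by blast
      then show ?thesis using tm(8)[of e] by auto
    qed
  qed
  have fA: "finite A" using Asub tm(1-3) finite_subset by blast
  define Tb where "Tb = (S \<union> T \<union> V) - A"
  define C where "C = {e \<in> E. (fst (ep e) \<in> A \<and> snd (ep e) \<in> Tb) \<or> (fst (ep e) \<in> Tb \<and> snd (ep e) \<in> A)}"
  have cut: "edge_cut_set S T V E ep C"
    unfolding edge_cut_set_def
    by (rule exI[of _ A], rule exI[of _ Tb]) (use Asub SA TA in \<open>auto simp: Tb_def C_def\<close>)
  have fvals: "f e \<in> {-1, 0, 1}" for e using fl unfolding isflow_def by blast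
  have eterm: "((if fst (ep e) \<in> A then 1 else 0) - (if snd (ep e) \<in> A then 1 else 0)) * f e = (if e \<in> C then 1 else 0)"
    if e: "e \<in> E" for e
  proof -
    have ends: "fst (ep e) \<in> S \<union> T \<union> V" "snd (ep e) \<in> S \<union> T \<union> V" using tm(8)[OF e] by auto
    consider "fst (ep e) \<in> A" "snd (ep e) \<notin> A" | "fst (ep e) \<notin> A" "snd (ep e) \<in> A"
      | "fst (ep e) \<in> A \<longleftrightarrow> snd (ep e) \<in> A" by blast
    then show ?thesis
    proof cases
      case 1
      then have ne: "fst (ep e) \<noteq> snd (ep e)" by auto
      have "f e = 1"
      proof (rule ccontr)
        assume "f e \<noteq> 1"
        then have "f e < 1" using fvals[of e] by auto
        then have "resr E ep f (fst (ep e)) (snd (ep e))" unfolding resr_def using ne e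
          by (auto intro!: bexI[of _ e])
        then show False using clos 1 by blast
      qed
      moreover have "e \<in> C" using 1 ends e unfolding C_def Tb_def by auto
      ultimately show ?thesis using 1 by simp
    next
      case 2
      then have ne: "fst (ep e) \<noteq> snd (ep e)" by auto
      have "f e = -1"
      proof (rule ccontr)
        assume "f e \<noteq> -1"
        then have "f e > -1" using fvals[of e] by auto
        then have "resr E ep f (snd (ep e)) (fst (ep e))" unfolding resr_def using ne e
          by (auto intro!: bexI[of _ e])
        then show False using clos 2 by blast
      qed
      moreover have "e \<in> C" using 2 ends e unfolding C_def Tb_def by auto
      ultimately show ?thesis using 2 by simp
    next
      case 3
      then have "e \<notin> C" unfolding C_def Tb_def by auto
      then show ?thesis using 3 by auto
    qed
  qed
  have "int (card C) = (\<Sum>e\<in>E. if e \<in> C then 1 else 0)"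
  proof -
    have "C \<subseteq> E" unfolding C_def by auto
    then have "(\<Sum>e\<in>E. if e \<in> C then 1 else (0::int)) = (\<Sum>e\<in>C. 1)"
      using tm(4) by (simp add: sum.If_cases Int_absorb1)
    then show ?thesis by simp
  qed
  also have "\<dots> = (\<Sum>x\<in>A. netf E ep f x)"
    unfolding sum_netf[OF fA] using eterm by (intro sum.cong) auto
  also have "\<dots> = (\<Sum>x\<in>S. netf E ep f x) + (\<Sum>x\<in>A - S. netf E ep f x)"
    using fA SA by (metis sum.subset_diff add.commute)
  also have "(\<Sum>x\<in>A - S. netf E ep f x) = 0"
  proof (rule sum.neutral, rule ballI)
    fix x assume "x \<in> A - S"
    then have "x \<in> V" using Asub TA by auto
    then show "netf E ep f x = 0" using fl unfolding isflow_def by blast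
  qed
  finally have "int (card C) = (\<Sum>x\<in>S. netf E ep f x)" by simp
  then show ?thesis using kmin[OF cut] lt by simp
qed

lemma flows_exist:
  assumes kmin: "\<And>C. edge_cut_set S T V E ep C \<Longrightarrow> k \<le> card C"
  shows "n \<le> k \<Longrightarrow> \<exists>f. isflow V E ep f \<and> (\<Sum>s\<in>S. netf E ep f s) = int n"
proof (induction n)
  case 0
  have "isflow V E ep (\<lambda>_. 0)" unfolding isflow_def netf_def by simp
  moreover have "(\<Sum>s\<in>S. netf E ep (\<lambda>_. 0) s) = int 0" unfolding netf_def by simp
  ultimately show ?case by blast
next
  case (Suc n)
  then obtain f where f: "isflow V E ep f" "(\<Sum>s\<in>S. netf E ep f s) = int n" by auto
  then have "(\<Sum>s\<in>S. netf E ep f s) < int k" using Suc by simp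
  from augment[OF f(1) this kmin] f(2) show ?case by auto
qed


lemma end_in: "e \<in> E \<Longrightarrow> fst (ep e) = v \<or> snd (ep e) = v \<Longrightarrow> (e, fst (ep e) \<noteq> v) \<in> ends E ep v"
  by (auto simp: ends_def)

lemma deg1: assumes "x \<in> S \<union> T" "e \<in> E" "e' \<in> E" "fst (ep e) = x \<or> snd (ep e) = x" "fst (ep e') = x \<or> snd (ep e') = x"
  shows "e = e'"
  using open_edge_unique[OF tmpl assms(1,2,4)] open_edge_unique[OF tmpl assms(1,3,5)] by simp

lemma decomp_aux:
  "card {e \<in> E. f e \<noteq> 0} = N \<Longrightarrow> isflow V E ep f \<Longrightarrow> int m \<le> (\<Sum>s\<in>S. netf E ep f s) \<Longrightarrow>
   \<exists>lab. (\<forall>e j. lab e = Some j \<longrightarrow> e \<in> E \<and> j < m \<and> f e \<noteq> 0) \<and>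
     (\<forall>j<m. \<exists>s\<in>S. \<exists>t\<in>T. lab (open_edge E ep s) = Some j \<and> lab (open_edge E ep t) = Some j \<and>
        (linked V ep lab)\<^sup>*\<^sup>* (open_edge E ep s) (open_edge E ep t))"
proof (induction N arbitrary: f m rule: less_induct)
  case (less N)
  note fl = less.prems(2) and val = less.prems(3)
  have fvals: "f e \<in> {-1, 0, 1}" for e using fl unfolding isflow_def by blast
  show ?case
  proof (cases "m = 0")
    case True
    then show ?thesis by (intro exI[of _ "\<lambda>_. None"]) auto
  next
    case False
    have "\<exists>s0\<in>S. netf E ep f s0 > 0"
    proof (rule ccontr)
      assume "\<not> (\<exists>s0\<in>S. netf E ep f s0 > 0)"
      then have "\<forall>s\<in>S. netf E ep f s \<le> 0" by force
      then have "(\<Sum>s\<in>S. netf E ep f s) \<le> 0" by (simp add: sum_nonpos)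
      then show False using val False by simp
    qed
    then obtain s0 where s0: "s0 \<in> S" "netf E ep f s0 > 0" by blast
    define Z where "Z = T \<union> {s \<in> S. netf E ep f s < 0}"
    define fw where "fw x y \<longleftrightarrow> x \<noteq> y \<and> (\<exists>e\<in>E. (ep e = (x, y) \<and> f e = 1) \<or> (ep e = (y, x) \<and> f e = -1))" for x y
    have "\<exists>z\<in>Z. reach fw {s0} z"
    proof (rule ccontr)
      assume no: "\<not> (\<exists>z\<in>Z. reach fw {s0} z)"
      define R where "R = {y. reach fw {s0} y}"
      have s0R: "s0 \<in> R" unfolding R_def by (simp add: reach_base)
      have clos: "y \<in> R" if "x \<in> R" "fw x y" for x y
        using that reach_step unfolding R_def by fast
      have Rsub: "R \<subseteq> S \<union> T \<union> V"
      proof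
        fix y assume "y \<in> R"
        then obtain n xs where xs: "xs 0 \<in> {s0}" "xs n = y" "walk fw n xs" unfolding R_def reach_def by blast
        show "y \<in> S \<union> T \<union> V"
        proof (cases n)
          case 0 then show ?thesis using xs s0 by simp
        next
          case (Suc m)
          then have "fw (xs m) y" using xs unfolding walk_def by auto
          then obtain e where "e \<in> E" "ep e = (xs m, y) \<or> ep e = (y, xs m)" unfolding fw_def by blast
          then show ?thesis using tm(8)[of e] by auto
        qed
      qed
      have fR: "finite R" using Rsub tm(1-3) finite_subset by blast
      have "(\<Sum>x\<in>R. netf E ep f x) \<le> 0"
        unfolding sum_netf[OF fR]
      proof (rule sum_nonpos)
        fix e assume e: "e \<in> E"
        show "((if fst (ep e) \<in> R then 1 else 0) - (if snd (ep e) \<in> R then 1 else 0)) * f e \<le> 0"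
        proof (cases "fst (ep e) = snd (ep e)")
          case True then show ?thesis by simp
        next
          case ne: False
          consider "f e = -1" | "f e = 0" | "f e = 1" using fvals[of e] by auto
          then show ?thesis
          proof cases
            case 1
            have "snd (ep e) \<in> R \<Longrightarrow> fst (ep e) \<in> R"
              using clos[of "snd (ep e)" "fst (ep e)"] ne e 1 unfolding fw_def
              by (metis prod.collapse)
            then show ?thesis using 1 by auto
          next
            case 2 then show ?thesis by simp
          next
            case 3
            have "fst (ep e) \<in> R \<Longrightarrow> snd (ep e) \<in> R"
              using clos[of "fst (ep e)" "snd (ep e)"] ne e 3 unfolding fw_def
              by (metis prod.collapse)
            then show ?thesis using 3 by auto
          qed
        qed
      qed
      moreover have "(\<Sum>x\<in>R. netf E ep f x) > 0"
      proof -
        have "(\<Sum>x\<in>R. netf E ep f x) = netf E ep f s0 + (\<Sum>x\<in>R - {s0}. netf E ep f x)"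
          using fR s0R by (simp add: sum.remove)
        moreover have "(\<Sum>x\<in>R - {s0}. netf E ep f x) \<ge> 0"
        proof (rule sum_nonneg)
          fix x assume x: "x \<in> R - {s0}"
          then have "x \<notin> Z" using no unfolding R_def by blast
          then show "netf E ep f x \<ge> 0" using Rsub x fl unfolding Z_def isflow_def by force
        qed
        ultimately show ?thesis using s0 by simp
      qed
      ultimately show False by simp
    qed
    then obtain z n0 xs0 where "xs0 0 \<in> {s0}" "walk fw n0 xs0" "xs0 n0 \<in> Z"
      unfolding reach_def by blast
    from shortest_walk[OF this] obtain n xs where xs: "xs 0 = s0" "xs n \<in> Z" "walk fw n xs"
      "inj_on xs {..n}" "\<forall>i<n. xs i \<notin> Z" by blast
    have n0: "n \<noteq> 0"
    proof
      assume "n = 0"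
      then have "s0 \<in> Z" using xs by simp
      then show False using s0 tm(5) unfolding Z_def by auto
    qed
    have "\<forall>i. \<exists>e. i < n \<longrightarrow> xs i \<noteq> xs (Suc i) \<and> e \<in> E \<and> ((ep e = (xs i, xs (Suc i)) \<and> f e = 1) \<or> (ep e = (xs (Suc i), xs i) \<and> f e = -1))"
      using xs(3) unfolding walk_def fw_def by blast
    then obtain es where es: "\<And>i. i < n \<Longrightarrow> xs i \<noteq> xs (Suc i) \<and> es i \<in> E \<and> ((ep (es i) = (xs i, xs (Suc i)) \<and> f (es i) = 1) \<or> (ep (es i) = (xs (Suc i), xs i) \<and> f (es i) = -1))"
      by metis
    have injes: "inj_on es {..<n}" by (rule edge_inj[OF xs(4), where ep = ep]) (use es in blast)
    define sg where "sg i = (if ep (es i) = (xs i, xs (Suc i)) then 1 else -1 :: int)" for i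
    define f' where "f' e = f e + (-1) * (\<Sum>i<n. if es i = e then sg i else 0)" for e
    have net: "netf E ep f' x = netf E ep f x + (-1) * ((if x = xs 0 then 1 else 0) - (if x = xs n then 1 else 0))" for x
      unfolding f'_def sg_def by (rule path_mod[OF tm(4)]) (use es in auto)
    have onpath: "f' e = 0" "f e \<noteq> 0" if inp: "e \<in> es ` {..<n}" for e
    proof -
      obtain i where i: "i < n" "e = es i" using inp by auto
      have "f' e = f e - sg i" unfolding f'_def using path_mod_val[OF injes i(1), of sg] i by simp
      then show "f' e = 0" "f e \<noteq> 0" using es[OF i(1)] i unfolding sg_def by (auto split: if_splits)
    qed
    have offpath: "f' e = f e" if "e \<notin> es ` {..<n}" for e
      unfolding f'_def using path_mod_out[OF that] by simp
    have valid: "f' e \<in> {-1, 0, 1}" for e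
      using onpath offpath fvals by (cases "e \<in> es ` {..<n}") auto
    have xsn: "xs n \<in> S \<union> T" using xs(2) unfolding Z_def by auto
    have cons: "\<forall>v\<in>V. netf E ep f' v = 0"
      using fl xs(1) s0 xsn tm(6,7) net unfolding isflow_def by auto
    have fl': "isflow V E ep f'" using valid cons unfolding isflow_def by blast
    have supp: "{e \<in> E. f' e \<noteq> 0} \<subset> {e \<in> E. f e \<noteq> 0}"
    proof
      show "{e \<in> E. f' e \<noteq> 0} \<subseteq> {e \<in> E. f e \<noteq> 0}"
      proof
        fix e assume e: "e \<in> {e \<in> E. f' e \<noteq> 0}"
        then have "e \<notin> es ` {..<n}" using onpath(1) by blast
        then show "e \<in> {e \<in> E. f e \<noteq> 0}" using e offpath by simp
      qed
      have "es 0 \<in> {e \<in> E. f e \<noteq> 0}" "es 0 \<notin> {e \<in> E. f' e \<noteq> 0}"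
        using es[of 0] n0 onpath[of "es 0"] by auto
      then show "{e \<in> E. f' e \<noteq> 0} \<noteq> {e \<in> E. f e \<noteq> 0}" by blast
    qed
    have lessN: "card {e \<in> E. f' e \<noteq> 0} < N"
      using psubset_card_mono[OF _ supp] tm(4) less.prems(1) by simp
    have sumS: "(\<Sum>s\<in>S. netf E ep f' s) = (\<Sum>s\<in>S. netf E ep f s) - 1 + (if xs n \<in> S then 1 else 0)"
    proof -
      have "(\<Sum>s\<in>S. netf E ep f' s) = (\<Sum>s\<in>S. netf E ep f s + ((if s = xs n then 1 else 0) - (if s = xs 0 then 1 else 0)))"
        using net by simp
      also have "\<dots> = (\<Sum>s\<in>S. netf E ep f s) - 1 + (if xs n \<in> S then 1 else 0)"
        using xs(1) s0 tm(1) by (auto simp: sum.distrib sum_subtractf)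
      finally show ?thesis .
    qed
    show ?thesis
    proof (cases "xs n \<in> T")
      case False
      then have "xs n \<in> S" using xsn by auto
      then have "int m \<le> (\<Sum>s\<in>S. netf E ep f' s)" using sumS val by simp
      from less.IH[OF lessN refl fl' this] obtain lab where
        lab: "\<forall>e j. lab e = Some j \<longrightarrow> e \<in> E \<and> j < m \<and> f' e \<noteq> 0"
          "\<forall>j<m. \<exists>s\<in>S. \<exists>t\<in>T. lab (open_edge E ep s) = Some j \<and> lab (open_edge E ep t) = Some j \<and>
            (linked V ep lab)\<^sup>*\<^sup>* (open_edge E ep s) (open_edge E ep t)" by blast
      have "\<forall>e j. lab e = Some j \<longrightarrow> e \<in> E \<and> j < m \<and> f e \<noteq> 0"
      proof (intro allI impI)
        fix e j assume a: "lab e = Some j"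
        then have h: "e \<in> E \<and> j < m \<and> f' e \<noteq> 0" using lab(1) by blast
        then have "e \<notin> es ` {..<n}" using onpath(1) by blast
        then show "e \<in> E \<and> j < m \<and> f e \<noteq> 0" using h offpath by simp
      qed
      then show ?thesis using lab(2) by blast
    next
      case True
      then have "xs n \<notin> S" using tm(5) by auto
      then have "int (m - 1) \<le> (\<Sum>s\<in>S. netf E ep f' s)" using sumS val False by simp
      from less.IH[OF lessN refl fl' this] obtain lab where
        lab: "\<forall>e j. lab e = Some j \<longrightarrow> e \<in> E \<and> j < m - 1 \<and> f' e \<noteq> 0"
          "\<forall>j<m - 1. \<exists>s\<in>S. \<exists>t\<in>T. lab (open_edge E ep s) = Some j \<and> lab (open_edge E ep t) = Some j \<and>
            (linked V ep lab)\<^sup>*\<^sup>* (open_edge E ep s) (open_edge E ep t)" by blast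
      define lab' where "lab' e = (if e \<in> es ` {..<n} then Some (m - 1) else lab e)" for e
      have lab_off: "lab' e = lab e" if nn: "lab e \<noteq> None" for e
      proof -
        obtain j where "lab e = Some j" using nn by auto
        then have "f' e \<noteq> 0" using lab(1) by blast
        then have "e \<notin> es ` {..<n}" using onpath by blast
        then show ?thesis by (simp add: lab'_def)
      qed
      have P1: "\<forall>e j. lab' e = Some j \<longrightarrow> e \<in> E \<and> j < m \<and> f e \<noteq> 0"
      proof (intro allI impI)
        fix e j assume a: "lab' e = Some j"
        show "e \<in> E \<and> j < m \<and> f e \<noteq> 0"
        proof (cases "e \<in> es ` {..<n}")
          case True
          then show ?thesis using a onpath es False unfolding lab'_def by auto
        next
          case nt: False
          then have "lab e = Some j" using a by (simp add: lab'_def)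
          then have "e \<in> E \<and> j < m - 1 \<and> f' e \<noteq> 0" using lab(1) by blast
          then show ?thesis using offpath[OF nt] by auto
        qed
      qed
      have mono: "linked V ep lab' x y" if lk: "linked V ep lab x y" for x y
      proof -
        from lk obtain j where j: "lab x = Some j" "lab y = Some j" unfolding linked_def by blast
        then have "lab' x = lab x" "lab' y = lab y" using lab_off by auto
        then show ?thesis using lk unfolding linked_def by simp
      qed
      have inV: "xs (Suc i) \<in> V" if i: "Suc i < n" for i
      proof -
        have notZ: "xs (Suc i) \<notin> Z" using xs(5) i by blast
        have e1: "es i \<in> E" "fst (ep (es i)) = xs (Suc i) \<or> snd (ep (es i)) = xs (Suc i)"
          using es[of i] i by auto
        have e2: "es (Suc i) \<in> E" "fst (ep (es (Suc i))) = xs (Suc i) \<or> snd (ep (es (Suc i))) = xs (Suc i)"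
          using es[of "Suc i"] i by auto
        have "es i \<noteq> es (Suc i)" using injes i by (auto dest: inj_onD)
        then have "xs (Suc i) \<notin> S \<union> T" using deg1[OF _ e1(1) e2(1) e1(2) e2(2)] by blast
        moreover have "xs (Suc i) \<in> S \<union> T \<union> V" using tm(8)[OF e1(1)] e1(2) by auto
        ultimately show ?thesis by auto
      qed
      have chain: "(linked V ep lab')\<^sup>*\<^sup>* (es 0) (es i)" if "i < n" for i
        using that
      proof (induction i)
        case 0 then show ?case by simp
      next
        case (Suc i)
        have i1: "i < n" "Suc i < n" using Suc.prems by auto
        have inimg: "es i \<in> es ` {..<n}" "es (Suc i) \<in> es ` {..<n}" using i1 by auto
        have l: "lab' (es i) = Some (m - 1)" "lab' (es (Suc i)) = Some (m - 1)"
          using inimg unfolding lab'_def by auto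
        have v1: "fst (ep (es i)) = xs (Suc i) \<or> snd (ep (es i)) = xs (Suc i)"
          using es[OF i1(1)] by auto
        have v2: "fst (ep (es (Suc i))) = xs (Suc i) \<or> snd (ep (es (Suc i))) = xs (Suc i)"
          using es[OF i1(2)] by auto
        have "linked V ep lab' (es i) (es (Suc i))"
          unfolding linked_def using l v1 v2 inV[OF i1(2)] by blast
        moreover have "(linked V ep lab')\<^sup>*\<^sup>* (es 0) (es i)" using Suc.IH i1(1) by blast
        ultimately show ?case by (rule rtranclp.rtrancl_into_rtrancl[rotated])
      qed
      have oe0: "open_edge E ep (xs 0) = es 0"
        by (rule open_edge_unique[OF tmpl]) (use xs(1) s0 es[of 0] n0 in auto)
      have oen: "open_edge E ep (xs n) = es (n - 1)"
      proof (rule open_edge_unique[OF tmpl])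
        show "xs n \<in> S \<union> T" using xsn .
        have "n - 1 < n" "Suc (n - 1) = n" using n0 by auto
        then show "es (n - 1) \<in> E" "fst (ep (es (n - 1))) = xs n \<or> snd (ep (es (n - 1))) = xs n"
          using es[of "n - 1"] by auto
      qed
      have P2: "\<forall>j<m. \<exists>s\<in>S. \<exists>t\<in>T. lab' (open_edge E ep s) = Some j \<and> lab' (open_edge E ep t) = Some j \<and>
            (linked V ep lab')\<^sup>*\<^sup>* (open_edge E ep s) (open_edge E ep t)"
      proof (intro allI impI)
        fix j assume j: "j < m"
        show "\<exists>s\<in>S. \<exists>t\<in>T. lab' (open_edge E ep s) = Some j \<and> lab' (open_edge E ep t) = Some j \<and>
            (linked V ep lab')\<^sup>*\<^sup>* (open_edge E ep s) (open_edge E ep t)"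
        proof (cases "j = m - 1")
          case True
          have nn: "n - 1 < n" "0 < n" using n0 by auto
          have inimg: "es 0 \<in> es ` {..<n}" "es (n - 1) \<in> es ` {..<n}" using nn by auto
          have l: "lab' (es 0) = Some j" "lab' (es (n - 1)) = Some j"
            using inimg True unfolding lab'_def by auto
          have x0: "xs 0 \<in> S" using xs(1) s0(1) by simp
          show ?thesis
          proof (intro bexI conjI)
            show "lab' (open_edge E ep (xs 0)) = Some j" using l oe0 by simp
            show "lab' (open_edge E ep (xs n)) = Some j" using l oen by simp
            show "(linked V ep lab')\<^sup>*\<^sup>* (open_edge E ep (xs 0)) (open_edge E ep (xs n))"
              using chain[OF nn(1)] oe0 oen by simp
          qed (use x0 \<open>xs n \<in> T\<close> in auto)
        next
          case False
          then have "j < m - 1" using j by simp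
          then obtain s t where st: "s \<in> S" "t \<in> T" "lab (open_edge E ep s) = Some j" "lab (open_edge E ep t) = Some j"
            "(linked V ep lab)\<^sup>*\<^sup>* (open_edge E ep s) (open_edge E ep t)" using lab(2) by blast
          have "(linked V ep lab')\<^sup>*\<^sup>* (open_edge E ep s) (open_edge E ep t)"
            using st(5) by (rule rtranclp_mono[THEN predicate2D, rotated]) (auto intro: mono)
          then show ?thesis using st lab_off by (intro bexI[of _ s] bexI[of _ t]) auto
        qed
      qed
      show ?thesis using P1 P2 by blast
    qed
  qed
qed

end


theorem proposition3p11:
  fixes S T V :: "'v set" and E :: "'e set" and ep :: "'e \<Rightarrow> 'v \<times> 'v" and c :: "'e \<Rightarrow> nat"
  assumes "tn_template S T V E ep c"
  shows "QMF S T V E ep c \<ge> (Min (c ` E)) ^ (Min {card C | C. edge_cut_set S T V E ep C})"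
proof -
  note tmpl = assms
  define K where "K = Min {card C | C. edge_cut_set S T V E ep C}"
  have fE: "finite E" using tm[OF tmpl] by simp
  have fin: "finite {card C | C. edge_cut_set S T V E ep C}"
  proof (rule finite_subset[of _ "{..card E}"])
    show "{card C | C. edge_cut_set S T V E ep C} \<subseteq> {..card E}"
    proof
      fix x assume "x \<in> {card C | C. edge_cut_set S T V E ep C}"
      then obtain C where C: "x = card C" "edge_cut_set S T V E ep C" by blast
      then have "C \<subseteq> E" unfolding edge_cut_set_def by auto
      then show "x \<in> {..card E}" using C(1) card_mono[OF fE] by auto
    qed
  qed simp
  have kmin: "K \<le> card C" if "edge_cut_set S T V E ep C" for C
    unfolding K_def by (rule Min_le[OF fin]) (use that in blast)
  obtain f where f: "isflow V E ep f" "(\<Sum>s\<in>S. netf E ep f s) = int K"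
    using flows_exist[OF tmpl kmin, of K] by auto
  then have "int K \<le> (\<Sum>s\<in>S. netf E ep f s)" by simp
  from decomp_aux[OF tmpl refl f(1) this] obtain lab where
    lab: "\<forall>e j. lab e = Some j \<longrightarrow> e \<in> E \<and> j < K \<and> f e \<noteq> 0"
      "\<forall>j<K. \<exists>s\<in>S. \<exists>t\<in>T. lab (open_edge E ep s) = Some j \<and> lab (open_edge E ep t) = Some j \<and>
        (linked V ep lab)\<^sup>*\<^sup>* (open_edge E ep s) (open_edge E ep t)" by blast
  have "Min (c ` E) ^ K \<le> QMF S T V E ep c"
  proof (rule tensor_bound[OF tmpl, where lab = lab])
    show "\<And>e j. lab e = Some j \<Longrightarrow> e \<in> E \<and> j < K" using lab(1) by blast
    show "\<And>j. j < K \<Longrightarrow> \<exists>s\<in>S. \<exists>t\<in>T. lab (open_edge E ep s) = Some j \<and> lab (open_edge E ep t) = Some j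
                 \<and> (linked V ep lab)\<^sup>*\<^sup>* (open_edge E ep s) (open_edge E ep t)" using lab(2) by blast
    show "\<And>e. e \<in> E \<Longrightarrow> Min (c ` E) \<le> c e" using fE by simp
  qed
  then show ?thesis unfolding K_def .
qed


end
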